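(* Fix an integer $k \ge 2$, a graphlet $\mathsf{G} = (\mathsf{V},\mathsf{E})$ with $\mathsf{V} = \{u_1,\dots,u_k\}$, and a privacy budget $\epsilon > 0$. Let $\tilde{\mathsf{G}}(G)$ be the output of Algorithm 1 (described in the context) on an input graph $G$ with $n$ nodes. Then the expected $\ell_2$-error of $\tilde{\mathsf{G}}(G)$ as an estimator of $\mathsf{G}(G)$ is $O(n^{k-1})$; that is, there is a constant $C$ (depending only on $k$, $\mathsf{G}$ and $\epsilon$) such that for every $n$ and every simple undirected graph $G$ on $n$ nodes, $$\sqrt{\mathbb{E}\big[(\tilde{\mathsf{G}}(G) - \mathsf{G}(G))^2\big]} \le C\, n^{k-1}.$$
   Context: Let $G=(V,E)$ be a simple undirected graph with $V=\{v_1,\dots,v_n\}$; user $v_i$ holds its adjacency vector $a_i=(a_{i,1},\dots,a_{i,n})$ with $a_{i,j}=1$ iff $\{v_i,v_j\}\in E$. A graphlet is a simple graph $\mathsf{G}=(\mathsf{V},\mathsf{E})$ with $\mathsf{V}=\{u_1,\dots,u_k\}$; $\mathsf{G}(G)$ denotes the number of distinct subgraphs $(V',E')$ of $G$ (not necessarily induced) isomorphic to $\mathsf{G}$. $A(\mathsf{G})$ is the number of automorphisms of $\mathsf{G}$ (bijections $\pi:\mathsf{V}\to\mathsf{V}$ with $\{\pi(u_i),\pi(u_j)\}\in\mathsf{E}$ iff $\{u_i,u_j\}\in\mathsf{E}$). Algorithm 1: (1) Randomized response: every user $v_i$ reports, independently for each $j\ne i$ (and independently across users), a bit $\tilde a_{i,j}$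 with $\Pr[\tilde a_{i,j}=1]=e^{\epsilon}/(1+e^{\epsilon})$ if $a_{i,j}=1$ and $=1/(1+e^{\epsilon})$ if $a_{i,j}=0$. (2) The server computes $\hat a_{i,j} = \frac{e^{\epsilon}+1}{e^{\epsilon}-1}\tilde a_{i,j} - \frac{1}{e^{\epsilon}-1}$. (3) Let $\mathcal{D}$ be the set of tuples $\mathcal{W}=(v_{\ell_1},\dots,v_{\ell_k})\in V^k$ of pairwise distinct nodes; for each such tuple set $\tilde W(\mathcal{W},\mathsf{G}) = \prod_{\{u_i,u_j\}\in\mathsf{E},\, i<j} \hat a_{\ell_i,\ell_j}$. (4) Output $\tilde{\mathsf{G}}(G) = \big(\sum_{\mathcal{W}\in\mathcal{D}} \tilde W(\mathcal{W},\mathsf{G})\big)/A(\mathsf{G})$. *)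

theory Defs
  imports "HOL-Probability.Probability"
begin

definition simple_graph :: "nat \<Rightarrow> nat set set \<Rightarrow> bool" where
  "simple_graph n E \<longleftrightarrow> (\<forall>e\<in>E. \<exists>i j. i < n \<and> j < n \<and> i \<noteq> j \<and> e = {i, j})"

definition adj :: "nat set set \<Rightarrow> nat \<Rightarrow> nat \<Rightarrow> bool" where
  "adj E i j \<longleftrightarrow> {i, j} \<in> E"

text \<open>Number of (not necessarily induced) subgraphs (V',E') of G=({0..<n},E)
  isomorphic to the graphlet ({0..<k},Eg).\<close>
definition graphlet_count :: "nat \<Rightarrow> nat set set \<Rightarrow> nat \<Rightarrow> nat set set \<Rightarrow> nat" where
  "graphlet_count k Eg n E = card {(V', E'). V' \<subseteq> {..<n} \<and> E' \<subseteq> E \<and> (\<forall>e\<in>E'. e \<subseteq> V') \<and>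
      (\<exists>f. bij_betw f {..<k} V' \<and>
           (\<forall>i<k. \<forall>j<k. {i, j} \<in> Eg \<longleftrightarrow> {f i, f j} \<in> E'))}"

definition num_aut :: "nat \<Rightarrow> nat set set \<Rightarrow> nat" where
  "num_aut k Eg = card {\<pi> \<in> {..<k} \<rightarrow>\<^sub>E {..<k}. bij_betw \<pi> {..<k} {..<k} \<and>
      (\<forall>i<k. \<forall>j<k. {\<pi> i, \<pi> j} \<in> Eg \<longleftrightarrow> {i, j} \<in> Eg)}"

definition rr_pmf :: "real \<Rightarrow> nat \<Rightarrow> nat set set \<Rightarrow> (nat \<times> nat \<Rightarrow> bool) pmf" where
  "rr_pmf \<epsilon> n E = Pi_pmf {(i, j). i < n \<and> j < n \<and> i \<noteq> j} False
     (\<lambda>(i, j). bernoulli_pmf (if adj E i j then exp \<epsilon> / (1 + exp \<epsilon>) else 1 / (1 + exp \<epsilon>)))"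

definition ahat :: "real \<Rightarrow> (nat \<times> nat \<Rightarrow> bool) \<Rightarrow> nat \<Rightarrow> nat \<Rightarrow> real" where
  "ahat \<epsilon> b i j = (exp \<epsilon> + 1) / (exp \<epsilon> - 1) * (if b (i, j) then 1 else 0) - 1 / (exp \<epsilon> - 1)"

definition tuples :: "nat \<Rightarrow> nat \<Rightarrow> (nat \<Rightarrow> nat) set" where
  "tuples k n = {l \<in> {..<k} \<rightarrow>\<^sub>E {..<n}. inj_on l {..<k}}"

definition alg1 :: "real \<Rightarrow> nat \<Rightarrow> nat set set \<Rightarrow> nat \<Rightarrow> (nat \<times> nat \<Rightarrow> bool) \<Rightarrow> real" where
  "alg1 \<epsilon> k Eg n b =
     (\<Sum>l\<in>tuples k n. \<Prod>(i, j)\<in>{(i, j). i < j \<and> j < k \<and> {i, j} \<in> Eg}. ahat \<epsilon> b (l i) (l j))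
     / real (num_aut k Eg)"

end

theory Submission
  imports Defs
begin


lemma exp_prod_Pi:
  fixes f :: "'a \<Rightarrow> 'b \<Rightarrow> real"
  assumes fin: "finite A" and fs: "finite (set_pmf (Pi_pmf A d p))"
  shows "measure_pmf.expectation (Pi_pmf A d p) (\<lambda>y. \<Prod>x\<in>A. f x (y x)) =
         (\<Prod>x\<in>A. measure_pmf.expectation (p x) (f x))"
proof -

  have ind: "prob_space.indep_vars (measure_pmf (Pi_pmf A d p)) (\<lambda>_. borel) (\<lambda>x y. f x (y x)) A"
    by (rule prob_space.indep_vars_compose2[OF measure_pmf.prob_space_axioms indep_vars_Pi_pmf[OF fin]]) auto
  have "measure_pmf.expectation (Pi_pmf A d p) (\<lambda>y. \<Prod>x\<in>A. f x (y x)) =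
        (\<Prod>x\<in>A. measure_pmf.expectation (Pi_pmf A d p) (\<lambda>y. f x (y x)))"
    by (rule prob_space.indep_vars_lebesgue_integral[OF measure_pmf.prob_space_axioms fin ind integrable_measure_pmf_finite[OF fs]])
  also have "\<dots> = (\<Prod>x\<in>A. measure_pmf.expectation (p x) (f x))"
  proof (rule prod.cong[OF refl])
    fix x assume x: "x \<in> A"
    have "measure_pmf.expectation (Pi_pmf A d p) (\<lambda>y. f x (y x)) =
          measure_pmf.expectation (map_pmf (\<lambda>y. y x) (Pi_pmf A d p)) (f x)" by simp
    also have "map_pmf (\<lambda>y. y x) (Pi_pmf A d p) = p x" using Pi_pmf_component[OF fin, of x d p] x by simp
    finally show "measure_pmf.expectation (Pi_pmf A d p) (\<lambda>y. f x (y x)) = measure_pmf.expectation (p x) (f x)" .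
  qed
  finally show ?thesis .
qed

lemma fin_rr: "finite (set_pmf (rr_pmf \<epsilon> n E))"
proof -
  have fA: "finite {(i, j). i < n \<and> j < n \<and> i \<noteq> (j::nat)}"
    by (rule finite_subset[of _ "{..<n} \<times> {..<n}"]) auto
  show ?thesis unfolding rr_pmf_def
    by (subst set_Pi_pmf[OF fA]) (rule finite_PiE_dflt[OF fA], simp)
qed



definition Idx :: "nat \<Rightarrow> (nat \<times> nat) set" where
  "Idx n = {(i, j). i < n \<and> j < n \<and> i \<noteq> j}"
definition Pset :: "nat \<Rightarrow> nat set set \<Rightarrow> (nat \<times> nat) set" where
  "Pset k Eg = {(i, j). i < j \<and> j < k \<and> {i, j} \<in> Eg}"
definition gfun :: "real \<Rightarrow> bool \<Rightarrow> real" where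
  "gfun \<epsilon> v = (exp \<epsilon> + 1) / (exp \<epsilon> - 1) * (if v then 1 else 0) - 1 / (exp \<epsilon> - 1)"
definition Sl :: "nat \<Rightarrow> nat set set \<Rightarrow> (nat \<Rightarrow> nat) \<Rightarrow> (nat \<times> nat) set" where
  "Sl k Eg l = (\<lambda>(i, j). (l i, l j)) ` Pset k Eg"
definition ind :: "nat set set \<Rightarrow> nat \<times> nat \<Rightarrow> real" where
  "ind E x = (if {fst x, snd x} \<in> E then 1 else 0)"

lemma finite_Idx: "finite (Idx n)"
  by (rule finite_subset[of _ "{..<n} \<times> {..<n}"]) (auto simp: Idx_def)

lemma finite_Pset: "finite (Pset k Eg)"
  by (rule finite_subset[of _ "{..<k} \<times> {..<k}"]) (auto simp: Pset_def)

lemma L1: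
  assumes "S \<subseteq> Idx n" "\<epsilon> > 0"
  shows "measure_pmf.expectation (rr_pmf \<epsilon> n E) (\<lambda>b. \<Prod>x\<in>S. gfun \<epsilon> (b x)) = (\<Prod>x\<in>S. ind E x)"
proof -
  define e where "e = exp \<epsilon>"
  have e1: "e > 1" using assms(2) by (simp add: e_def)
  have SI: "Idx n \<inter> {x. x \<in> S} = S" "Idx n \<inter> S = S" "Idx n \<inter> - {x. x \<in> S} = Idx n - S" using assms(1) by auto
  have "(\<lambda>b. \<Prod>x\<in>S. gfun \<epsilon> (b x)) = (\<lambda>b. \<Prod>x\<in>Idx n. (\<lambda>x v. if x \<in> S then gfun \<epsilon> v else 1) x (b x))"
    by (rule ext) (simp add: prod.If_cases[OF finite_Idx] SI)
  hence "measure_pmf.expectation (rr_pmf \<epsilon> n E) (\<lambda>b. \<Prod>x\<in>S. gfun \<epsilon> (b x)) =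
     (\<Prod>x\<in>Idx n. measure_pmf.expectation ((\<lambda>(i, j). bernoulli_pmf (if adj E i j then exp \<epsilon> / (1 + exp \<epsilon>) else 1 / (1 + exp \<epsilon>))) x)
       ((\<lambda>x v. if x \<in> S then gfun \<epsilon> v else 1) x))"
    unfolding rr_pmf_def using exp_prod_Pi[OF finite_Idx fin_rr[unfolded rr_pmf_def Idx_def[symmetric]]]
    by (simp add: Idx_def)
  also have "\<dots> = (\<Prod>x\<in>Idx n. if x \<in> S then ind E x else 1)"
  proof (rule prod.cong[OF refl])
    fix x assume "x \<in> Idx n"
    obtain i j where x: "x = (i, j)" by (cases x)
    have p1: "0 \<le> e / (1 + e)" "e / (1 + e) \<le> 1" "0 \<le> 1 / (1 + e)" "1 / (1 + e) \<le> 1" using e1 by auto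
    have a1: "e / (e - 1) * (e / (1 + e)) - 1 / (e - 1) * (1 - e / (1 + e)) = 1"
    proof -
      have h1: "1 - e / (1 + e) = 1 / (1 + e)" using e1 by (simp add: field_simps)
      have h2: "(e - 1) * (1 + e) = e * e - 1" by (simp add: algebra_simps)
      have "e / (e - 1) * (e / (1 + e)) - 1 / (e - 1) * (1 / (1 + e)) = (e * e - 1) / ((e - 1) * (1 + e))"
        by (simp add: field_simps diff_divide_distrib)
      also have "\<dots> = 1" using e1 h2 less_1_mult[OF e1 e1] by simp
      finally show ?thesis using h1 by simp
    qed
    have a0: "e / (e - 1) * (1 / (1 + e)) - 1 / (e - 1) * (1 - 1 / (1 + e)) = 0"
      using e1 by (simp add: field_simps)
    have g: "gfun \<epsilon> True = e / (e - 1)" "gfun \<epsilon> False = - (1 / (e - 1))"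
    proof -
      have "(e + 1) / (e - 1) - 1 / (e - 1) = e / (e - 1)" by (simp add: diff_divide_distrib[symmetric])
      then show "gfun \<epsilon> True = e / (e - 1)" "gfun \<epsilon> False = - (1 / (e - 1))"
        by (simp_all add: gfun_def e_def[symmetric])
    qed
    show "measure_pmf.expectation ((\<lambda>(i, j). bernoulli_pmf (if adj E i j then exp \<epsilon> / (1 + exp \<epsilon>) else 1 / (1 + exp \<epsilon>))) x)
       ((\<lambda>x v. if x \<in> S then gfun \<epsilon> v else 1) x) = (if x \<in> S then ind E x else 1)"
    proof (cases "x \<in> S")
      case False then show ?thesis by (simp add: x)
    next
      case True
      define q where "q = (if adj E i j then e / (1 + e) else 1 / (1 + e))"
      have q01: "0 \<le> q" "q \<le> 1" using p1 by (auto simp: q_def)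
      have "measure_pmf.expectation (bernoulli_pmf q) (gfun \<epsilon>) = gfun \<epsilon> True * q + gfun \<epsilon> False * (1 - q)"
        by (rule integral_bernoulli_pmf[OF q01])
      also have "\<dots> = ind E x"
      proof (cases "adj E i j")
        case True
        then show ?thesis using a1 by (simp add: q_def g ind_def x adj_def)
      next
        case False
        then show ?thesis using a0 by (simp add: q_def g ind_def x adj_def)
      qed
      finally show ?thesis using True by (cases "adj E i j") (simp_all add: x q_def e_def[symmetric])
    qed
  qed
  also have "\<dots> = (\<Prod>x\<in>S. ind E x)"
    by (simp add: prod.If_cases[OF finite_Idx] SI)
  finally show ?thesis .
qed



lemma sg_edge: "simple_graph n E \<Longrightarrow> e \<in> E \<Longrightarrow> \<exists>i j. i < n \<and> j < n \<and> i \<noteq> j \<and> e = {i, j}"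
  by (auto simp: simple_graph_def)

lemma edge_pres:
  assumes sgk: "simple_graph k Eg" and inj: "inj_on l {..<k}" and i: "i < k" and j: "j < k"
  shows "{l i, l j} \<in> (\<lambda>e. l ` e) ` Eg \<longleftrightarrow> {i, j} \<in> Eg"
proof
  assume "{l i, l j} \<in> (\<lambda>e. l ` e) ` Eg"
  then obtain e where e: "e \<in> Eg" "{l i, l j} = l ` e" by auto
  obtain a b where ab: "a < k" "b < k" "e = {a, b}" using sg_edge[OF sgk e(1)] by blast
  have "{l i, l j} = {l a, l b}" using e ab by simp
  then have "(l i = l a \<and> l j = l b) \<or> (l i = l b \<and> l j = l a)" by (auto simp: doubleton_eq_iff)
  then have "(i = a \<and> j = b) \<or> (i = b \<and> j = a)"
    using inj i j ab by (auto dest: inj_onD)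
  then show "{i, j} \<in> Eg" using e ab by (auto simp: insert_commute)
next
  assume "{i, j} \<in> Eg"
  then show "{l i, l j} \<in> (\<lambda>e. l ` e) ` Eg" by (intro image_eqI[where x="{i, j}"]) auto
qed

lemma H_alt:
  assumes sgk: "simple_graph k Eg"
  shows "(\<forall>(i, j)\<in>Pset k Eg. {l i, l j} \<in> E) \<longleftrightarrow> (\<forall>e\<in>Eg. l ` e \<in> E)"
proof
  assume H: "\<forall>(i, j)\<in>Pset k Eg. {l i, l j} \<in> E"
  show "\<forall>e\<in>Eg. l ` e \<in> E"
  proof
    fix e assume e: "e \<in> Eg"
    obtain a b where ab: "a < k" "b < k" "a \<noteq> b" "e = {a, b}" using sg_edge[OF sgk e] by blast
    show "l ` e \<in> E"
    proof (cases "a < b")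
      case True
      then have "(a, b) \<in> Pset k Eg" using ab e by (auto simp: Pset_def)
      then show ?thesis using H ab by auto
    next
      case False
      then have "(b, a) \<in> Pset k Eg" using ab e by (auto simp: Pset_def insert_commute)
      then show ?thesis using H ab by (auto simp: insert_commute)
    qed
  qed
next
  assume "\<forall>e\<in>Eg. l ` e \<in> E"
  then show "\<forall>(i, j)\<in>Pset k Eg. {l i, l j} \<in> E" by (force simp: Pset_def)
qed



lemma comb_card:
  assumes sgk: "simple_graph k Eg" and sgn: "simple_graph n E"
  shows "card {l \<in> tuples k n. \<forall>e\<in>Eg. l ` e \<in> E} = num_aut k Eg * graphlet_count k Eg n E"
proof -
  define H where "H = {l \<in> tuples k n. \<forall>e\<in>Eg. l ` e \<in> E}"
  define Aut where "Aut = {\<pi> \<in> {..<k} \<rightarrow>\<^sub>E {..<k}. bij_betw \<pi> {..<k} {..<k} \<and>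
      (\<forall>i<k. \<forall>j<k. {\<pi> i, \<pi> j} \<in> Eg \<longleftrightarrow> {i, j} \<in> Eg)}"
  define Sg where "Sg = {(V', E'). V' \<subseteq> {..<n} \<and> E' \<subseteq> E \<and> (\<forall>e\<in>E'. e \<subseteq> V') \<and>
      (\<exists>f. bij_betw f {..<k} V' \<and>
           (\<forall>i<k. \<forall>j<k. {i, j} \<in> Eg \<longleftrightarrow> {f i, f j} \<in> E'))}"
  define \<Phi> where "\<Phi> l = (l ` {..<k}, (\<lambda>e. l ` e) ` Eg)" for l :: "nat \<Rightarrow> nat"
  have Egk: "e \<subseteq> {..<k}" if "e \<in> Eg" for e using sg_edge[OF sgk that] by auto
  have finH: "finite H"
    by (rule finite_subset[of _ "{..<k} \<rightarrow>\<^sub>E {..<n}"]) (auto simp: H_def tuples_def intro: finite_PiE)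
  have finAut: "finite Aut"
    by (rule finite_subset[of _ "{..<k} \<rightarrow>\<^sub>E {..<k}"]) (auto simp: Aut_def intro: finite_PiE)
  have Hmem: "l \<in> H \<longleftrightarrow> l \<in> {..<k} \<rightarrow>\<^sub>E {..<n} \<and> inj_on l {..<k} \<and> (\<forall>e\<in>Eg. l ` e \<in> E)" for l
    by (auto simp: H_def tuples_def)
  have img: "\<Phi> ` H = Sg"
  proof
    show "\<Phi> ` H \<subseteq> Sg"
    proof
      fix y assume "y \<in> \<Phi> ` H"
      then obtain l where l: "l \<in> H" "y = \<Phi> l" by auto
      have lP: "l \<in> {..<k} \<rightarrow>\<^sub>E {..<n}" "inj_on l {..<k}" "\<forall>e\<in>Eg. l ` e \<in> E" using l Hmem by auto
      have "l ` {..<k} \<subseteq> {..<n}" using lP(1) by auto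
      moreover have "(\<lambda>e. l ` e) ` Eg \<subseteq> E" using lP(3) by auto
      moreover have "\<forall>e\<in>(\<lambda>e. l ` e) ` Eg. e \<subseteq> l ` {..<k}" using Egk by auto
      moreover have "bij_betw l {..<k} (l ` {..<k})" using lP(2) by (simp add: bij_betw_def)
      moreover have "\<forall>i<k. \<forall>j<k. {i, j} \<in> Eg \<longleftrightarrow> {l i, l j} \<in> (\<lambda>e. l ` e) ` Eg"
        using edge_pres[OF sgk lP(2)] by blast
      ultimately show "y \<in> Sg" unfolding Sg_def l(2) \<Phi>_def by blast
    qed
  next
    show "Sg \<subseteq> \<Phi> ` H"
    proof
      fix y assume "y \<in> Sg"
      then obtain V' E' f where y: "y = (V', E')" and V': "V' \<subseteq> {..<n}" and E': "E' \<subseteq> E"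
        and EV: "\<forall>e\<in>E'. e \<subseteq> V'" and f: "bij_betw f {..<k} V'"
        and fe: "\<forall>i<k. \<forall>j<k. {i, j} \<in> Eg \<longleftrightarrow> {f i, f j} \<in> E'"
        unfolding Sg_def by blast
      define l where "l = restrict f {..<k}"
      have lf: "l i = f i" if "i < k" for i using that by (simp add: l_def)
      have linj: "inj_on l {..<k}" using f unfolding bij_betw_def l_def inj_on_def by auto
      have limg: "l ` {..<k} = V'" using f unfolding bij_betw_def l_def by auto
      have lPi: "l \<in> {..<k} \<rightarrow>\<^sub>E {..<n}" using limg V' by (auto simp: l_def)
      have ledge: "(\<lambda>e. l ` e) ` Eg = E'"
      proof
        show "(\<lambda>e. l ` e) ` Eg \<subseteq> E'"
        proof
          fix e' assume "e' \<in> (\<lambda>e. l ` e) ` Eg"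
          then obtain e where e: "e \<in> Eg" "e' = l ` e" by auto
          obtain a b where ab: "a < k" "b < k" "e = {a, b}" using sg_edge[OF sgk e(1)] by blast
          show "e' \<in> E'" using fe ab e lf by auto
        qed
      next
        show "E' \<subseteq> (\<lambda>e. l ` e) ` Eg"
        proof
          fix e' assume e': "e' \<in> E'"
          obtain x z where xz: "e' = {x, z}" using sg_edge[OF sgn] e' E' by blast
          have "x \<in> V'" "z \<in> V'" using EV e' xz by auto
          then obtain a b where ab: "a < k" "b < k" "x = l a" "z = l b" using limg by auto
          have "{a, b} \<in> Eg" using fe ab e' xz lf by auto
          moreover have "e' = l ` {a, b}" using xz ab by auto
          ultimately show "e' \<in> (\<lambda>e. l ` e) ` Eg" by blast
        qed
      qed
      have "l \<in> H" using Hmem lPi linj ledge E' by auto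
      moreover have "y = \<Phi> l" using y limg ledge by (simp add: \<Phi>_def)
      ultimately show "y \<in> \<Phi> ` H" by blast
    qed
  qed
  have fiber: "card {l' \<in> H. \<Phi> l' = \<Phi> l} = card Aut" if lH: "l \<in> H" for l
  proof -
    have lP: "l \<in> {..<k} \<rightarrow>\<^sub>E {..<n}" "inj_on l {..<k}" "\<forall>e\<in>Eg. l ` e \<in> E" using lH Hmem by auto
    define \<Psi> where "\<Psi> \<pi> = restrict (l \<circ> \<pi>) {..<k}" for \<pi> :: "nat \<Rightarrow> nat"
    have inj\<Psi>: "inj_on \<Psi> Aut"
    proof (rule inj_onI)
      fix \<pi>1 \<pi>2 assume p1: "\<pi>1 \<in> Aut" and p2: "\<pi>2 \<in> Aut" and eq: "\<Psi> \<pi>1 = \<Psi> \<pi>2"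
      show "\<pi>1 = \<pi>2"
      proof (rule PiE_ext)
        show "\<pi>1 \<in> {..<k} \<rightarrow>\<^sub>E {..<k}" "\<pi>2 \<in> {..<k} \<rightarrow>\<^sub>E {..<k}" using p1 p2 by (auto simp: Aut_def)
        fix i assume i: "i \<in> {..<k}"
        have "l (\<pi>1 i) = l (\<pi>2 i)" using fun_cong[OF eq, of i] i by (simp add: \<Psi>_def)
        moreover have "\<pi>1 i < k" "\<pi>2 i < k" using p1 p2 i by (auto simp: Aut_def)
        ultimately show "\<pi>1 i = \<pi>2 i" using lP(2) by (auto dest: inj_onD)
      qed
    qed
    have fib: "{l' \<in> H. \<Phi> l' = \<Phi> l} = \<Psi> ` Aut"
    proof
      show "\<Psi> ` Aut \<subseteq> {l' \<in> H. \<Phi> l' = \<Phi> l}"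
      proof
        fix l' assume "l' \<in> \<Psi> ` Aut"
        then obtain \<pi> where p: "\<pi> \<in> Aut" "l' = \<Psi> \<pi>" by auto
        have pPi: "\<pi> \<in> {..<k} \<rightarrow>\<^sub>E {..<k}" and pb: "bij_betw \<pi> {..<k} {..<k}"
          and pe: "\<forall>i<k. \<forall>j<k. {\<pi> i, \<pi> j} \<in> Eg \<longleftrightarrow> {i, j} \<in> Eg" using p by (auto simp: Aut_def)
        have l'i: "l' i = l (\<pi> i)" if "i < k" for i using that p by (simp add: \<Psi>_def)
        have pimg: "\<pi> ` {..<k} = {..<k}" using pb by (simp add: bij_betw_def)
        have l'img: "l' ` e = l ` (\<pi> ` e)" if "e \<subseteq> {..<k}" for e
          using that l'i by (auto simp: image_iff subset_iff)
        have Egp: "(\<lambda>e. \<pi> ` e) ` Eg = Eg"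
        proof
          show "(\<lambda>e. \<pi> ` e) ` Eg \<subseteq> Eg"
          proof
            fix e' assume "e' \<in> (\<lambda>e. \<pi> ` e) ` Eg"
            then obtain e where e: "e \<in> Eg" "e' = \<pi> ` e" by auto
            obtain a b where ab: "a < k" "b < k" "e = {a, b}" using sg_edge[OF sgk e(1)] by blast
            show "e' \<in> Eg" using pe ab e by auto
          qed
        next
          show "Eg \<subseteq> (\<lambda>e. \<pi> ` e) ` Eg"
          proof
            fix e' assume e': "e' \<in> Eg"
            obtain c d where cd: "c < k" "d < k" "e' = {c, d}" using sg_edge[OF sgk e'] by blast
            obtain a b where ab: "a < k" "b < k" "c = \<pi> a" "d = \<pi> b" using cd pimg
              by (metis imageE lessThan_iff)
            have "{a, b} \<in> Eg" using pe ab cd e' by auto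
            moreover have "e' = \<pi> ` {a, b}" using ab cd by auto
            ultimately show "e' \<in> (\<lambda>e. \<pi> ` e) ` Eg" by blast
          qed
        qed
        have pk': "\<pi> i < k" if "i < k" for i using pPi that by (auto simp: PiE_iff)
        have lk: "l i < n" if "i < k" for i using lP(1) that by (auto simp: PiE_iff)
        have l'Pi: "l' \<in> {..<k} \<rightarrow>\<^sub>E {..<n}" using pk' lk by (simp add: p(2) \<Psi>_def PiE_iff)
        have l'inj: "inj_on l' {..<k}"
        proof (rule inj_onI)
          fix a b assume a: "a \<in> {..<k}" and b: "b \<in> {..<k}" and eq: "l' a = l' b"
          have "l (\<pi> a) = l (\<pi> b)" using eq a b l'i by simp
          then have "\<pi> a = \<pi> b" using lP(2) pPi a b by (auto dest: inj_onD)
          then show "a = b" using pb a b by (auto simp: bij_betw_def dest: inj_onD)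
        qed
        have E'eq: "(\<lambda>e. l' ` e) ` Eg = (\<lambda>e. l ` e) ` Eg"
        proof -
          have "(\<lambda>e. l' ` e) ` Eg = (\<lambda>e. l ` e) ` ((\<lambda>e. \<pi> ` e) ` Eg)"
            using l'img Egk by (auto simp: image_image intro!: image_cong)
          then show ?thesis using Egp by simp
        qed
        have "\<forall>e\<in>Eg. l' ` e \<in> E"
        proof
          fix e assume e: "e \<in> Eg"
          have "l' ` e \<in> (\<lambda>e. l' ` e) ` Eg" using e by (rule imageI)
          then have "l' ` e \<in> (\<lambda>e. l ` e) ` Eg" by (simp only: E'eq)
          then obtain e0 where "e0 \<in> Eg" "l' ` e = l ` e0" using E'eq by auto
          then show "l' ` e \<in> E" using lP(3) by simp
        qed
        then have "l' \<in> H" using Hmem l'Pi l'inj by auto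
        moreover have "\<Phi> l' = \<Phi> l" using E'eq l'img[of "{..<k}"] pimg by (simp add: \<Phi>_def)
        ultimately show "l' \<in> {l' \<in> H. \<Phi> l' = \<Phi> l}" by simp
      qed
    next
      show "{l' \<in> H. \<Phi> l' = \<Phi> l} \<subseteq> \<Psi> ` Aut"
      proof
        fix l' assume "l' \<in> {l' \<in> H. \<Phi> l' = \<Phi> l}"
        then have l'H: "l' \<in> H" and eq: "\<Phi> l' = \<Phi> l" by auto
        have l'P: "l' \<in> {..<k} \<rightarrow>\<^sub>E {..<n}" "inj_on l' {..<k}" "\<forall>e\<in>Eg. l' ` e \<in> E" using l'H Hmem by auto
        have imgeq: "l' ` {..<k} = l ` {..<k}" and Eeq: "(\<lambda>e. l' ` e) ` Eg = (\<lambda>e. l ` e) ` Eg"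
          using eq by (auto simp: \<Phi>_def)
        define \<pi> where "\<pi> = restrict (\<lambda>i. the_inv_into {..<k} l (l' i)) {..<k}"
        have pk: "\<pi> i < k" and lp: "l (\<pi> i) = l' i" if i: "i < k" for i
        proof -
          have "l' i \<in> l ` {..<k}" using imgeq i by auto
          then show "\<pi> i < k" "l (\<pi> i) = l' i" using i lP(2)
            by (auto simp: \<pi>_def the_inv_into_f_f f_the_inv_into_f the_inv_into_into)
        qed
        have pPi: "\<pi> \<in> {..<k} \<rightarrow>\<^sub>E {..<k}" using pk by (auto simp: \<pi>_def)
        have pinj: "inj_on \<pi> {..<k}"
        proof (rule inj_onI)
          fix a b assume a: "a \<in> {..<k}" and b: "b \<in> {..<k}" and e: "\<pi> a = \<pi> b"
          then have "l' a = l' b" using lp by (metis lessThan_iff)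
          then show "a = b" using l'P(2) a b by (auto dest: inj_onD)
        qed
        have pb: "bij_betw \<pi> {..<k} {..<k}"
          unfolding bij_betw_def using pinj endo_inj_surj[of "{..<k}" \<pi>] pk by auto
        have pe: "\<forall>i<k. \<forall>j<k. {\<pi> i, \<pi> j} \<in> Eg \<longleftrightarrow> {i, j} \<in> Eg"
        proof (intro allI impI)
          fix i j assume i: "i < k" and j: "j < k"
          have "{\<pi> i, \<pi> j} \<in> Eg \<longleftrightarrow> {l (\<pi> i), l (\<pi> j)} \<in> (\<lambda>e. l ` e) ` Eg"
            using edge_pres[OF sgk lP(2) pk[OF i] pk[OF j]] by simp
          also have "\<dots> \<longleftrightarrow> {l' i, l' j} \<in> (\<lambda>e. l' ` e) ` Eg" using lp i j Eeq by simp
          also have "\<dots> \<longleftrightarrow> {i, j} \<in> Eg" using edge_pres[OF sgk l'P(2) i j] .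
          finally show "{\<pi> i, \<pi> j} \<in> Eg \<longleftrightarrow> {i, j} \<in> Eg" .
        qed
        have "\<pi> \<in> Aut" using pPi pb pe by (simp add: Aut_def)
        moreover have "l' = \<Psi> \<pi>"
        proof (rule PiE_ext[OF l'P(1)])
          have lk: "l i < n" if "i < k" for i using lP(1) that by (auto simp: PiE_iff)
          show "\<Psi> \<pi> \<in> {..<k} \<rightarrow>\<^sub>E {..<n}" using pk lk by (simp add: \<Psi>_def PiE_iff)
          fix i assume "i \<in> {..<k}"
          then show "l' i = \<Psi> \<pi> i" using lp by (simp add: \<Psi>_def)
        qed
        ultimately show "l' \<in> \<Psi> ` Aut" by blast
      qed
    qed
    show ?thesis using fib card_image[OF inj\<Psi>] by simp
  qed
  have Hu: "H = (\<Union>y\<in>\<Phi> ` H. {l \<in> H. \<Phi> l = y})" by auto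
  have "card (\<Union>y\<in>\<Phi> ` H. {l \<in> H. \<Phi> l = y}) = (\<Sum>y\<in>\<Phi> ` H. card {l \<in> H. \<Phi> l = y})"
    by (rule card_UN_disjoint) (use finH in auto)
  then have "card H = (\<Sum>y\<in>\<Phi> ` H. card {l \<in> H. \<Phi> l = y})" using Hu by simp
  also have "\<dots> = (\<Sum>y\<in>\<Phi> ` H. card Aut)"
  proof (rule sum.cong[OF refl])
    fix y assume "y \<in> \<Phi> ` H"
    then obtain l where "l \<in> H" "y = \<Phi> l" by auto
    then show "card {l \<in> H. \<Phi> l = y} = card Aut" using fiber by simp
  qed
  also have "\<dots> = card Aut * card Sg" using img by simp
  finally show ?thesis unfolding H_def num_aut_def graphlet_count_def Aut_def Sg_def .
qed



lemma card_fix2: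
  assumes "a < k" "b < k" "a \<noteq> b"
  shows "card {l \<in> {..<k} \<rightarrow>\<^sub>E {..<n::nat}. l a = x \<and> l b = y} \<le> n ^ (k - 2)"
proof -
  define K where "K = {..<k} - {a, b}"
  have cK: "card K = k - 2" using assms by (simp add: K_def card_Diff_subset)
  define T where "T = {l \<in> {..<k} \<rightarrow>\<^sub>E {..<n::nat}. l a = x \<and> l b = y}"
  have inj: "inj_on (\<lambda>f. restrict f K) T"
  proof (rule inj_onI)
    fix f g assume f: "f \<in> T" and g: "g \<in> T" and eq: "restrict f K = restrict g K"
    show "f = g"
    proof (rule PiE_ext)
      show "f \<in> {..<k} \<rightarrow>\<^sub>E {..<n}" "g \<in> {..<k} \<rightarrow>\<^sub>E {..<n}" using f g by (auto simp: T_def)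
      fix i assume i: "i \<in> {..<k}"
      show "f i = g i"
      proof (cases "i \<in> K")
        case True then show ?thesis using fun_cong[OF eq, of i] by simp
      next
        case False then have "i = a \<or> i = b" using i by (auto simp: K_def)
        moreover have "f a = g a" "f b = g b" using f g by (simp_all add: T_def)
        ultimately show ?thesis by blast
      qed
    qed
  qed
  have sub: "(\<lambda>f. restrict f K) ` T \<subseteq> K \<rightarrow>\<^sub>E {..<n}"
  proof
    fix g assume "g \<in> (\<lambda>f. restrict f K) ` T"
    then obtain f where f: "f \<in> T" "g = restrict f K" by blast
    have "\<forall>i\<in>{..<k}. f i \<in> {..<n}" using f(1) unfolding T_def PiE_iff by blast
    moreover have "K \<subseteq> {..<k}" by (auto simp: K_def)
    ultimately show "g \<in> K \<rightarrow>\<^sub>E {..<n}" using f(2) by (auto simp: PiE_iff)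
  qed
  have "card T \<le> card (K \<rightarrow>\<^sub>E {..<n})"
    by (rule card_inj_on_le[OF inj sub]) (auto simp: K_def intro: finite_PiE)
  also have "\<dots> = n ^ (k - 2)" proof -
    have "finite K" by (simp add: K_def)
    then show ?thesis by (simp add: card_PiE cK)
  qed
  finally show ?thesis by (simp add: T_def)
qed

lemma prod_ind: "finite S \<Longrightarrow> (\<Prod>x\<in>S. if Q x then 1 else (0::real)) = (if \<forall>x\<in>S. Q x then 1 else 0)"
  by (induction S rule: finite_induct) auto

lemma sum_ind: "finite S \<Longrightarrow> (\<Sum>x\<in>S. if Q x then 1 else (0::real)) = real (card {x\<in>S. Q x})"
  by (simp add: sum.If_cases Collect_conj_eq Int_commute)



theorem theorem1:
  fixes k :: nat and Eg :: "nat set set" and \<epsilon> :: real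
  assumes "k \<ge> 2" and "simple_graph k Eg" and "\<epsilon> > 0"
  shows "\<exists>C::real. \<forall>n::nat. \<forall>E::nat set set. simple_graph n E \<longrightarrow>
     sqrt (measure_pmf.expectation (rr_pmf \<epsilon> n E)
             (\<lambda>b. (alg1 \<epsilon> k Eg n b - real (graphlet_count k Eg n E))\<^sup>2))
       \<le> C * real n ^ (k - 1)"
proof -
  note k2 = assms(1) and sgk = assms(2) and eps = assms(3)
  define e where "e = exp \<epsilon>"
  have e1: "e > 1" using eps by (simp add: e_def)
  define M where "M = (e + 1) / (e - 1)"
  have M1: "M \<ge> 1" using e1 by (simp add: M_def)
  define P where "P = Pset k Eg"
  define B where "B = M ^ card P + 1"
  have B0: "B \<ge> 0" using M1 by (simp add: B_def)
  have gM: "\<bar>gfun \<epsilon> v\<bar> \<le> M" for v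
  proof -
    have g: "gfun \<epsilon> True = e / (e - 1)" "gfun \<epsilon> False = - (1 / (e - 1))"
    proof -
      have "(e + 1) / (e - 1) - 1 / (e - 1) = e / (e - 1)" by (simp add: diff_divide_distrib[symmetric])
      then show "gfun \<epsilon> True = e / (e - 1)" "gfun \<epsilon> False = - (1 / (e - 1))"
        by (simp_all add: gfun_def e_def[symmetric])
    qed
    have "e / (e - 1) \<le> M" "1 / (e - 1) \<le> M" using e1 by (simp_all add: M_def divide_right_mono)
    moreover have "0 \<le> e / (e - 1)" "0 \<le> 1 / (e - 1)" using e1 by simp_all
    ultimately show ?thesis by (cases v) (simp_all add: g)
  qed
  show ?thesis
  proof (rule exI[of _ "B * real (card P)"], intro allI impI)
    fix n :: nat and E :: "nat set set" assume sgn: "simple_graph n E"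
    define D where "D = tuples k n"
    define R where "R = rr_pmf \<epsilon> n E"
    define Y where "Y l b = (\<Prod>x\<in>Sl k Eg l. gfun \<epsilon> (b x))" for l b
    define m where "m l = (\<Prod>x\<in>Sl k Eg l. ind E x)" for l
    define Z where "Z l b = Y l b - m l" for l b
    define A where "A = real (num_aut k Eg)"
    define c where "c = real (graphlet_count k Eg n E)"
    have Dsub: "D \<subseteq> {..<k} \<rightarrow>\<^sub>E {..<n}" by (auto simp: D_def tuples_def)
    have finD: "finite D" by (rule finite_subset[OF Dsub]) (auto intro: finite_PiE)
    have finPiE: "finite ({..<k} \<rightarrow>\<^sub>E {..<n})" by (auto intro: finite_PiE)
    have cardD: "real (card D) \<le> real n ^ k"
    proof -
      have "card D \<le> card ({..<k} \<rightarrow>\<^sub>E {..<n})" by (rule card_mono[OF _ Dsub]) (auto intro: finite_PiE)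
      also have "\<dots> = n ^ k" by (simp add: card_PiE)
      finally show ?thesis by (metis of_nat_le_iff of_nat_power)
    qed
    have int: "integrable (measure_pmf R) f" for f :: "_ \<Rightarrow> real"
      by (simp add: R_def integrable_measure_pmf_finite fin_rr)
    have finP: "finite P" by (simp add: P_def finite_Pset)
    have Dl: "inj_on l {..<k} \<and> (\<forall>i<k. l i < n)" if "l \<in> D" for l
      using that by (auto simp: D_def tuples_def PiE_iff)
    have Slinj: "inj_on (\<lambda>(i, j). (l i, l j)) P" if "l \<in> D" for l
    proof (rule inj_onI)
      fix p q assume p: "p \<in> P" and q: "q \<in> P" and eq: "(\<lambda>(i, j). (l i, l j)) p = (\<lambda>(i, j). (l i, l j)) q"
      obtain i j where pij: "p = (i, j)" by (cases p)
      obtain i' j' where qij: "q = (i', j')" by (cases q)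
      have "i < k" "j < k" "i' < k" "j' < k" using p q pij qij by (auto simp: P_def Pset_def)
      moreover have "l i = l i'" "l j = l j'" using eq pij qij by auto
      ultimately show "p = q" using Dl[OF that] pij qij by (auto dest: inj_onD)
    qed
    have SlIdx: "Sl k Eg l \<subseteq> Idx n" if "l \<in> D" for l
    proof
      fix x assume "x \<in> Sl k Eg l"
      then obtain i j where x: "x = (l i, l j)" and ij: "i < j" "j < k" by (auto simp: Sl_def Pset_def)
      have "l i \<noteq> l j" using Dl[OF that] ij by (auto dest: inj_onD)
      then show "x \<in> Idx n" using Dl[OF that] ij x by (auto simp: Idx_def)
    qed
    have finSl: "finite (Sl k Eg l)" for l by (simp add: Sl_def finite_Pset)
    have cardSl: "card (Sl k Eg l) = card P" if "l \<in> D" for l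
      using card_image[OF Slinj[OF that]] by (simp add: Sl_def P_def)
    have Yalg: "(\<Prod>(i, j)\<in>P. ahat \<epsilon> b (l i) (l j)) = Y l b" if "l \<in> D" for l b
    proof -
      have "Y l b = (\<Prod>p\<in>P. gfun \<epsilon> (b ((\<lambda>(i, j). (l i, l j)) p)))"
        unfolding Y_def Sl_def P_def[symmetric] by (simp add: prod.reindex[OF Slinj[OF that]] o_def)
      also have "\<dots> = (\<Prod>(i, j)\<in>P. ahat \<epsilon> b (l i) (l j))"
        by (rule prod.cong) (auto simp: ahat_def gfun_def)
      finally show ?thesis by simp
    qed
    have malg: "m l = (if \<forall>e\<in>Eg. l ` e \<in> E then 1 else 0)" if "l \<in> D" for l
    proof -
      have "m l = (\<Prod>p\<in>P. ind E ((\<lambda>(i, j). (l i, l j)) p))"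
        unfolding m_def Sl_def P_def[symmetric] by (simp add: prod.reindex[OF Slinj[OF that]] o_def)
      also have "\<dots> = (\<Prod>p\<in>P. if {l (fst p), l (snd p)} \<in> E then 1 else 0)"
        by (rule prod.cong) (auto simp: ind_def)
      also have "\<dots> = (if \<forall>p\<in>P. {l (fst p), l (snd p)} \<in> E then 1 else 0)"
        by (rule prod_ind[OF finP])
      also have "(\<forall>p\<in>P. {l (fst p), l (snd p)} \<in> E) \<longleftrightarrow> (\<forall>(i, j)\<in>Pset k Eg. {l i, l j} \<in> E)"
        by (auto simp: P_def)
      also have "\<dots> \<longleftrightarrow> (\<forall>e\<in>Eg. l ` e \<in> E)" by (rule H_alt[OF sgk])
      finally show ?thesis .
    qed
    have comb: "(\<Sum>l\<in>D. m l) = A * c"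
    proof -
      have "(\<Sum>l\<in>D. m l) = (\<Sum>l\<in>D. if \<forall>e\<in>Eg. l ` e \<in> E then 1 else 0)"
        by (rule sum.cong) (simp_all add: malg)
      also have "\<dots> = real (card {l \<in> D. \<forall>e\<in>Eg. l ` e \<in> E})" by (rule sum_ind[OF finD])
      also have "\<dots> = A * c" unfolding A_def c_def D_def comb_card[OF sgk sgn] by simp
      finally show ?thesis .
    qed
    have A1: "A \<ge> 1"
    proof -
      define Aut where "Aut = {\<pi> \<in> {..<k} \<rightarrow>\<^sub>E {..<k}. bij_betw \<pi> {..<k} {..<k} \<and>
        (\<forall>i<k. \<forall>j<k. {\<pi> i, \<pi> j} \<in> Eg \<longleftrightarrow> {i, j} \<in> Eg)}"
      have "finite Aut" by (rule finite_subset[of _ "{..<k} \<rightarrow>\<^sub>E {..<k}"]) (auto simp: Aut_def intro: finite_PiE)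
      moreover have "restrict id {..<k} \<in> Aut"
      proof -
        have "bij_betw (restrict id {..<k}) {..<k} {..<k}"
          by (rule bij_betw_cong[THEN iffD2, of _ _ id]) auto
        then show ?thesis by (auto simp: Aut_def)
      qed
      ultimately have "card Aut \<ge> 1" by (metis card_0_eq empty_iff less_one linorder_not_le)
      then show ?thesis by (simp add: A_def num_aut_def Aut_def[symmetric])
    qed
    have alg: "alg1 \<epsilon> k Eg n b = (\<Sum>l\<in>D. Y l b) / A" for b
    proof -
      have "alg1 \<epsilon> k Eg n b = (\<Sum>l\<in>D. \<Prod>(i, j)\<in>P. ahat \<epsilon> b (l i) (l j)) / A"
        by (simp add: alg1_def D_def P_def Pset_def A_def)
      also have "\<dots> = (\<Sum>l\<in>D. Y l b) / A" by (simp add: Yalg)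
      finally show ?thesis .
    qed
    have diff: "alg1 \<epsilon> k Eg n b - c = (\<Sum>l\<in>D. Z l b) / A" for b
    proof -
      have "c = (\<Sum>l\<in>D. m l) / A" using comb A1 by simp
      then show ?thesis by (simp add: alg Z_def sum_subtractf diff_divide_distrib)
    qed
    have EY: "measure_pmf.expectation R (Y l) = m l" if "l \<in> D" for l
      unfolding Y_def m_def R_def by (rule L1[OF SlIdx[OF that] eps])
    have EYY: "measure_pmf.expectation R (\<lambda>b. Y l b * Y l' b) = m l * m l'"
      if "l \<in> D" "l' \<in> D" "Sl k Eg l \<inter> Sl k Eg l' = {}" for l l'
    proof -
      have "(\<lambda>b. Y l b * Y l' b) = (\<lambda>b. \<Prod>x\<in>Sl k Eg l \<union> Sl k Eg l'. gfun \<epsilon> (b x))"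
        unfolding Y_def by (rule ext, rule prod.union_disjoint[symmetric]) (use finSl that(3) in auto)
      then have "measure_pmf.expectation R (\<lambda>b. Y l b * Y l' b) = (\<Prod>x\<in>Sl k Eg l \<union> Sl k Eg l'. ind E x)"
        unfolding R_def using L1[of "Sl k Eg l \<union> Sl k Eg l'" n \<epsilon> E] SlIdx[OF that(1)] SlIdx[OF that(2)] eps
        by simp
      also have "\<dots> = m l * m l'"
        unfolding m_def by (rule prod.union_disjoint) (use finSl that(3) in auto)
      finally show ?thesis .
    qed
    have EZZ0: "measure_pmf.expectation R (\<lambda>b. Z l b * Z l' b) = 0"
      if "l \<in> D" "l' \<in> D" "Sl k Eg l \<inter> Sl k Eg l' = {}" for l l'
    proof -
      have "(\<lambda>b. Z l b * Z l' b) = (\<lambda>b. (Y l b * Y l' b - m l' * Y l b) - (m l * Y l' b - m l * m l'))"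
        by (rule ext) (simp add: Z_def algebra_simps)
      then have "measure_pmf.expectation R (\<lambda>b. Z l b * Z l' b) =
         (measure_pmf.expectation R (\<lambda>b. Y l b * Y l' b) - m l' * measure_pmf.expectation R (Y l))
         - (m l * measure_pmf.expectation R (Y l') - m l * m l')"
        by (simp add: int)
      also have "\<dots> = 0" using EYY[OF that] EY[OF that(1)] EY[OF that(2)] by simp
      finally show ?thesis .
    qed
    have Zb: "\<bar>Z l b\<bar> \<le> B" if "l \<in> D" for l b
    proof -
      have "\<bar>Y l b\<bar> = (\<Prod>x\<in>Sl k Eg l. \<bar>gfun \<epsilon> (b x)\<bar>)" by (simp add: Y_def abs_prod)
      also have "\<dots> \<le> M ^ card P"
        by (rule prod_le_power) (use gM M1 cardSl[OF that] in auto)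
      finally have y: "\<bar>Y l b\<bar> \<le> M ^ card P" .
      have "\<bar>m l\<bar> \<le> 1" using malg[OF that] by simp
      then show ?thesis using y by (simp add: Z_def B_def)
    qed
    have EZZ: "measure_pmf.expectation R (\<lambda>b. Z l b * Z l' b) \<le> (if Sl k Eg l \<inter> Sl k Eg l' = {} then 0 else B\<^sup>2)"
      if "l \<in> D" "l' \<in> D" for l l'
    proof (cases "Sl k Eg l \<inter> Sl k Eg l' = {}")
      case True then show ?thesis using EZZ0[OF that] by simp
    next
      case False
      have pw: "Z l b * Z l' b \<le> B\<^sup>2" for b
      proof -
        have "Z l b * Z l' b \<le> \<bar>Z l b\<bar> * \<bar>Z l' b\<bar>" by (metis abs_ge_self abs_mult)
        also have "\<dots> \<le> B * B" by (rule mult_mono) (use Zb[OF that(1)] Zb[OF that(2)] B0 in auto)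
        finally show ?thesis by (simp add: power2_eq_square)
      qed
      have "measure_pmf.expectation R (\<lambda>b. Z l b * Z l' b) \<le> B\<^sup>2"
        by (rule prob_space.integral_le_const[OF measure_pmf.prob_space_axioms int]) (simp add: pw)
      then show ?thesis using False by simp
    qed
    have Esq: "measure_pmf.expectation R (\<lambda>b. (\<Sum>l\<in>D. Z l b)\<^sup>2) =
        (\<Sum>l\<in>D. \<Sum>l'\<in>D. measure_pmf.expectation R (\<lambda>b. Z l b * Z l' b))"
    proof -
      have "(\<lambda>b. (\<Sum>l\<in>D. Z l b)\<^sup>2) = (\<lambda>b. \<Sum>l\<in>D. \<Sum>l'\<in>D. Z l b * Z l' b)"
        by (rule ext) (simp add: power2_eq_square sum_product)
      then have "measure_pmf.expectation R (\<lambda>b. (\<Sum>l\<in>D. Z l b)\<^sup>2) =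
          (\<Sum>l\<in>D. measure_pmf.expectation R (\<lambda>b. \<Sum>l'\<in>D. Z l b * Z l' b))"
        by (simp add: Bochner_Integration.integral_sum int)
      also have "\<dots> = (\<Sum>l\<in>D. \<Sum>l'\<in>D. measure_pmf.expectation R (\<lambda>b. Z l b * Z l' b))"
        by (rule sum.cong[OF refl]) (simp add: Bochner_Integration.integral_sum int)
      finally show ?thesis .
    qed
    have overlap: "(\<Sum>l'\<in>D. (if Sl k Eg l \<inter> Sl k Eg l' = {} then 0 else 1::real)) \<le> (real (card P))\<^sup>2 * real n ^ (k - 2)"
      if lD: "l \<in> D" for l
    proof -
      define Q where "Q p p' l' = (if l' (fst p') = l (fst p) \<and> l' (snd p') = l (snd p) then 1 else (0::real))" for p p' and l' :: "nat \<Rightarrow> nat"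
      have Q0: "Q p p' l' \<ge> 0" for p p' l' by (simp add: Q_def)
      have step1: "(if Sl k Eg l \<inter> Sl k Eg l' = {} then 0 else 1::real) \<le> (\<Sum>p\<in>P. \<Sum>p'\<in>P. Q p p' l')" for l'
      proof (cases "Sl k Eg l \<inter> Sl k Eg l' = {}")
        case True then show ?thesis by (simp add: sum_nonneg Q0)
      next
        case False
        then obtain x where "x \<in> Sl k Eg l" "x \<in> Sl k Eg l'" by blast
        then obtain p p' where pp: "p \<in> P" "p' \<in> P" "x = (l (fst p), l (snd p))" "x = (l' (fst p'), l' (snd p'))"
          by (auto simp: Sl_def P_def)
        have "1 = Q p p' l'" using pp by (simp add: Q_def)
        also have "\<dots> \<le> (\<Sum>p'\<in>P. Q p p' l')" by (rule member_le_sum) (use pp finP Q0 in auto)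
        also have "\<dots> \<le> (\<Sum>p\<in>P. \<Sum>p'\<in>P. Q p p' l')" 
          by (rule member_le_sum[where f="\<lambda>p. \<Sum>p'\<in>P. Q p p' l'"]) (use pp finP Q0 in \<open>auto intro: sum_nonneg\<close>)
        finally show ?thesis using False by simp
      qed
      have "(\<Sum>l'\<in>D. (if Sl k Eg l \<inter> Sl k Eg l' = {} then 0 else 1::real)) \<le> (\<Sum>l'\<in>D. \<Sum>p\<in>P. \<Sum>p'\<in>P. Q p p' l')"
        by (rule sum_mono) (rule step1)
      also have "\<dots> = (\<Sum>p\<in>P. \<Sum>p'\<in>P. \<Sum>l'\<in>D. Q p p' l')"
        by (subst sum.swap) (simp add: sum.swap[of _ D])
      also have "\<dots> \<le> (\<Sum>p\<in>P. \<Sum>p'\<in>P. real n ^ (k - 2))"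
      proof (rule sum_mono, rule sum_mono)
        fix p p' assume p: "p \<in> P" and p': "p' \<in> P"
        have p'k: "fst p' < k" "snd p' < k" "fst p' \<noteq> snd p'" using p' by (auto simp: P_def Pset_def)
        have "(\<Sum>l'\<in>D. Q p p' l') = real (card {l' \<in> D. l' (fst p') = l (fst p) \<and> l' (snd p') = l (snd p)})"
          unfolding Q_def by (rule sum_ind[OF finD])
        also have "card {l' \<in> D. l' (fst p') = l (fst p) \<and> l' (snd p') = l (snd p)} \<le>
            card {l' \<in> {..<k} \<rightarrow>\<^sub>E {..<n}. l' (fst p') = l (fst p) \<and> l' (snd p') = l (snd p)}"
          by (rule card_mono[OF finite_subset[OF _ finPiE]]) (use Dsub in auto)
        also have "\<dots> \<le> n ^ (k - 2)" by (rule card_fix2[OF p'k])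
        finally show "(\<Sum>l'\<in>D. Q p p' l') \<le> real n ^ (k - 2)" by (metis of_nat_le_iff of_nat_power)
      qed
      also have "\<dots> = (real (card P))\<^sup>2 * real n ^ (k - 2)" by (simp add: power2_eq_square)
      finally show ?thesis .
    qed
    have bound: "measure_pmf.expectation R (\<lambda>b. (\<Sum>l\<in>D. Z l b)\<^sup>2) \<le> B\<^sup>2 * ((real (card P))\<^sup>2 * real n ^ (k - 2)) * real n ^ k"
    proof -
      have "measure_pmf.expectation R (\<lambda>b. (\<Sum>l\<in>D. Z l b)\<^sup>2) \<le>
          (\<Sum>l\<in>D. \<Sum>l'\<in>D. (if Sl k Eg l \<inter> Sl k Eg l' = {} then 0 else B\<^sup>2))"
        unfolding Esq by (intro sum_mono EZZ)
      also have "\<dots> = (\<Sum>l\<in>D. B\<^sup>2 * (\<Sum>l'\<in>D. (if Sl k Eg l \<inter> Sl k Eg l' = {} then 0 else 1)))"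
        by (simp add: sum_distrib_left if_distrib cong: if_cong)
      also have "\<dots> \<le> (\<Sum>l\<in>D. B\<^sup>2 * ((real (card P))\<^sup>2 * real n ^ (k - 2)))"
        by (intro sum_mono mult_left_mono overlap) auto
      also have "\<dots> = B\<^sup>2 * ((real (card P))\<^sup>2 * real n ^ (k - 2)) * real (card D)" by simp
      also have "\<dots> \<le> B\<^sup>2 * ((real (card P))\<^sup>2 * real n ^ (k - 2)) * real n ^ k"
        by (rule mult_left_mono[OF cardD]) simp
      finally show ?thesis .
    qed
    have main: "measure_pmf.expectation R (\<lambda>b. (alg1 \<epsilon> k Eg n b - c)\<^sup>2) \<le> (B * real (card P) * real n ^ (k - 1))\<^sup>2"
    proof -
      have "measure_pmf.expectation R (\<lambda>b. (alg1 \<epsilon> k Eg n b - c)\<^sup>2) =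
          measure_pmf.expectation R (\<lambda>b. (\<Sum>l\<in>D. Z l b)\<^sup>2) / A\<^sup>2"
        by (simp add: diff power_divide)
      also have "\<dots> \<le> measure_pmf.expectation R (\<lambda>b. (\<Sum>l\<in>D. Z l b)\<^sup>2) / 1"
      proof (rule divide_left_mono)
        show "0 \<le> measure_pmf.expectation R (\<lambda>b. (\<Sum>l\<in>D. Z l b)\<^sup>2)" by simp
        show "1 \<le> A\<^sup>2" using A1 by (simp add: one_le_power)
        show "0 < A\<^sup>2 * 1" using A1 by simp
      qed
      also have "\<dots> \<le> B\<^sup>2 * ((real (card P))\<^sup>2 * real n ^ (k - 2)) * real n ^ k" using bound by simp
      also have "\<dots> = (B * real (card P) * real n ^ (k - 1))\<^sup>2"
      proof -
        have "k - 2 + k = (k - 1) + (k - 1)" using k2 by simp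
        then have "real n ^ (k - 2) * real n ^ k = real n ^ (k - 1) * real n ^ (k - 1)"
          by (metis power_add)
        then show ?thesis by (simp add: power2_eq_square algebra_simps)
      qed
      finally show ?thesis .
    qed
    have nn: "0 \<le> B * real (card P) * real n ^ (k - 1)" using B0 by simp
    have "sqrt (measure_pmf.expectation R (\<lambda>b. (alg1 \<epsilon> k Eg n b - c)\<^sup>2)) \<le> sqrt ((B * real (card P) * real n ^ (k - 1))\<^sup>2)"
      using main by (rule real_sqrt_le_mono)
    also have "\<dots> = B * real (card P) * real n ^ (k - 1)" using nn by simp
    finally show "sqrt (measure_pmf.expectation (rr_pmf \<epsilon> n E)
             (\<lambda>b. (alg1 \<epsilon> k Eg n b - real (graphlet_count k Eg n E))\<^sup>2))
       \<le> B * real (card P) * real n ^ (k - 1)" by (simp add: R_def c_def)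
  qed
qed

end
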